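(* Let $u(x,y)$, $v(x,y)$ be two conjugate harmonic functions on an open set $\Omega\subset\mathbb{R}^2$, i.e. $u_x=v_y$ and $u_y=-v_x$ on $\Omega$. Let $\psi(x,y)$ be a (sufficiently smooth) real function on $\Omega$ satisfying $$(v\,\psi_x)_x+(v\,\psi_y)_y=0 .$$ Define $$f_2=-\psi_y,\quad g_2=\psi_x,\quad f_1=-\psi_y u-\psi_x v,\quad g_1=\psi_x u-\psi_y v,\quad \Lambda=\psi_x^2+\psi_y^2 .$$ Then the geodesic flow of the metric $ds^2=\Lambda(x,y)(dx^2+dy^2)$ admits the rational first integral $$F=\frac{f_1(x,y)p_1+g_1(x,y)p_2}{f_2(x,y)p_1+g_2(x,y)p_2}.$$
   Context: For a metric $ds^2=\Lambda(x,y)(dx^2+dy^2)$ in coordinates $(x,y)$ with momenta $(p_1,p_2)$, the geodesic flow is the Hamiltonian system with Hamiltonian $H=\frac{p_1^2+p_2^2}{2\Lambda}$ and canonical Poisson bracket $\{F,H\}=\sum_{i=1}^2\left(\frac{\partial F}{\partial x^i}\frac{\partial H}{\partial p_i}-\frac{\partial F}{\partial p_i}\frac{\partial H}{\partial x^i}\right)$ with $x^1=x$, $x^2=y$. A function $F(x,y,p_1,p_2)$ is a first integral if $\{F,H\}\equiv 0$ (wherever $F$ and $H$ are defined). *)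

theory Defs
  imports "HOL-Analysis.Analysis"
begin

definition pdx :: "(real \<Rightarrow> real \<Rightarrow> real) \<Rightarrow> real \<Rightarrow> real \<Rightarrow> real" where
  "pdx f x y = deriv (\<lambda>t. f t y) x"
definition pdy :: "(real \<Rightarrow> real \<Rightarrow> real) \<Rightarrow> real \<Rightarrow> real \<Rightarrow> real" where
  "pdy f x y = deriv (\<lambda>t. f x t) y"

definition has_partials2 :: "(real \<Rightarrow> real \<Rightarrow> real) \<Rightarrow> real \<Rightarrow> real \<Rightarrow> bool" where
  "has_partials2 f x y \<longleftrightarrow> (\<lambda>t. f t y) differentiable (at x) \<and> (\<lambda>t. f x t) differentiable (at y)"

definition C2_on :: "(real \<times> real) set \<Rightarrow> (real \<Rightarrow> real \<Rightarrow> real) \<Rightarrow> bool" where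
  "C2_on \<Omega> f \<longleftrightarrow>
     (\<forall>(x,y)\<in>\<Omega>. has_partials2 f x y \<and> has_partials2 (pdx f) x y \<and> has_partials2 (pdy f) x y) \<and>
     continuous_on \<Omega> (\<lambda>(x,y). f x y) \<and>
     continuous_on \<Omega> (\<lambda>(x,y). pdx f x y) \<and> continuous_on \<Omega> (\<lambda>(x,y). pdy f x y) \<and>
     continuous_on \<Omega> (\<lambda>(x,y). pdx (pdx f) x y) \<and> continuous_on \<Omega> (\<lambda>(x,y). pdy (pdx f) x y) \<and>
     continuous_on \<Omega> (\<lambda>(x,y). pdx (pdy f) x y) \<and> continuous_on \<Omega> (\<lambda>(x,y). pdy (pdy f) x y)"

definition C1_on :: "(real \<times> real) set \<Rightarrow> (real \<Rightarrow> real \<Rightarrow> real) \<Rightarrow> bool" where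
  "C1_on \<Omega> f \<longleftrightarrow>
     (\<forall>(x,y)\<in>\<Omega>. has_partials2 f x y) \<and>
     continuous_on \<Omega> (\<lambda>(x,y). f x y) \<and>
     continuous_on \<Omega> (\<lambda>(x,y). pdx f x y) \<and> continuous_on \<Omega> (\<lambda>(x,y). pdy f x y)"

type_synonym phase_fun = "real \<Rightarrow> real \<Rightarrow> real \<Rightarrow> real \<Rightarrow> real"

definition d_x :: "phase_fun \<Rightarrow> phase_fun" where "d_x F x y p1 p2 = deriv (\<lambda>t. F t y p1 p2) x"
definition d_y :: "phase_fun \<Rightarrow> phase_fun" where "d_y F x y p1 p2 = deriv (\<lambda>t. F x t p1 p2) y"
definition d_p1 :: "phase_fun \<Rightarrow> phase_fun" where "d_p1 F x y p1 p2 = deriv (\<lambda>t. F x y t p2) p1"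
definition d_p2 :: "phase_fun \<Rightarrow> phase_fun" where "d_p2 F x y p1 p2 = deriv (\<lambda>t. F x y p1 t) p2"

definition has_partials4 :: "phase_fun \<Rightarrow> real \<Rightarrow> real \<Rightarrow> real \<Rightarrow> real \<Rightarrow> bool" where
  "has_partials4 F x y p1 p2 \<longleftrightarrow>
     (\<lambda>t. F t y p1 p2) differentiable (at x) \<and> (\<lambda>t. F x t p1 p2) differentiable (at y) \<and>
     (\<lambda>t. F x y t p2) differentiable (at p1) \<and> (\<lambda>t. F x y p1 t) differentiable (at p2)"

definition poisson :: "phase_fun \<Rightarrow> phase_fun \<Rightarrow> phase_fun" where
  "poisson F H x y p1 p2 =
     d_x F x y p1 p2 * d_p1 H x y p1 p2 + d_y F x y p1 p2 * d_p2 H x y p1 p2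
   - d_p1 F x y p1 p2 * d_x H x y p1 p2 - d_p2 F x y p1 p2 * d_y H x y p1 p2"

text \<open>Hamiltonian of the geodesic flow of ds^2 = Lambda (dx^2 + dy^2).\<close>
definition geod_H :: "(real \<Rightarrow> real \<Rightarrow> real) \<Rightarrow> phase_fun" where
  "geod_H Lam x y p1 p2 = (p1^2 + p2^2) / (2 * Lam x y)"

end

theory Submission
  imports Defs
begin

lemma dist_sq_le:
  fixes x0 y0 s t :: real
  shows "dist (s,t) (x0,y0) \<le> \<bar>s - x0\<bar> + \<bar>t - y0\<bar>"
  using sqrt_sum_squares_le_sum_abs[of "s - x0" "t - y0"]
  by (simp add: dist_Pair_Pair dist_real_def)

lemma schwarz_key:
  fixes f :: "real \<Rightarrow> real \<Rightarrow> real"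
  assumes h: "0 < h"
    and S: "\<And>s t. x0 \<le> s \<Longrightarrow> s \<le> x0 + h \<Longrightarrow> y0 \<le> t \<Longrightarrow> t \<le> y0 + h \<Longrightarrow>
              has_partials2 f s t \<and> has_partials2 (pdx f) s t \<and> has_partials2 (pdy f) s t"
  shows "\<exists>s t s' t'. x0 \<le> s \<and> s \<le> x0 + h \<and> y0 \<le> t \<and> t \<le> y0 + h \<and>
           x0 \<le> s' \<and> s' \<le> x0 + h \<and> y0 \<le> t' \<and> t' \<le> y0 + h \<and>
           pdy (pdx f) s t = pdx (pdy f) s' t'"
proof -
  define Dl where "Dl = f (x0+h) (y0+h) - f (x0+h) y0 - f x0 (y0+h) + f x0 y0"
  have "\<exists>z. x0 < z \<and> z < x0 + h \<and>
     (f (x0+h) (y0+h) - f (x0+h) y0) - (f x0 (y0+h) - f x0 y0) = ((x0+h) - x0) * (pdx f z (y0+h) - pdx f z y0)"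
  proof (rule MVT2[where f = "\<lambda>s. f s (y0+h) - f s y0"])
    fix s assume "x0 \<le> s" "s \<le> x0 + h"
    then have "has_partials2 f s (y0+h)" "has_partials2 f s y0" using S h by auto
    then show "((\<lambda>s. f s (y0+h) - f s y0) has_real_derivative (pdx f s (y0+h) - pdx f s y0)) (at s)"
      unfolding has_partials2_def pdx_def
      by (intro DERIV_diff) (auto simp: DERIV_deriv_iff_real_differentiable)
  qed (use h in auto)
  then obtain s where s: "x0 < s" "s < x0 + h" "Dl = h * (pdx f s (y0+h) - pdx f s y0)"
    unfolding Dl_def by auto
  have "\<exists>z. y0 < z \<and> z < y0 + h \<and> pdx f s (y0+h) - pdx f s y0 = ((y0+h) - y0) * pdy (pdx f) s z"
  proof (rule MVT2[where f = "\<lambda>t. pdx f s t"])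
    fix t assume "y0 \<le> t" "t \<le> y0 + h"
    then have "has_partials2 (pdx f) s t" using S s by auto
    then show "((\<lambda>t. pdx f s t) has_real_derivative pdy (pdx f) s t) (at t)"
      unfolding has_partials2_def pdy_def
      by (auto simp: DERIV_deriv_iff_real_differentiable)
  qed (use h in auto)
  then obtain t where t: "y0 < t" "t < y0 + h" "Dl = h * (h * pdy (pdx f) s t)"
    using s by auto
  have "\<exists>z. y0 < z \<and> z < y0 + h \<and>
     (f (x0+h) (y0+h) - f x0 (y0+h)) - (f (x0+h) y0 - f x0 y0) = ((y0+h) - y0) * (pdy f (x0+h) z - pdy f x0 z)"
  proof (rule MVT2[where f = "\<lambda>t. f (x0+h) t - f x0 t"])
    fix t assume "y0 \<le> t" "t \<le> y0 + h"
    then have "has_partials2 f (x0+h) t" "has_partials2 f x0 t" using S h by auto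
    then show "((\<lambda>t. f (x0+h) t - f x0 t) has_real_derivative (pdy f (x0+h) t - pdy f x0 t)) (at t)"
      unfolding has_partials2_def pdy_def
      by (intro DERIV_diff) (auto simp: DERIV_deriv_iff_real_differentiable)
  qed (use h in auto)
  then obtain t' where t': "y0 < t'" "t' < y0 + h" "Dl = h * (pdy f (x0+h) t' - pdy f x0 t')"
    unfolding Dl_def by (auto simp: algebra_simps)
  have "\<exists>z. x0 < z \<and> z < x0 + h \<and> pdy f (x0+h) t' - pdy f x0 t' = ((x0+h) - x0) * pdx (pdy f) z t'"
  proof (rule MVT2[where f = "\<lambda>s. pdy f s t'"])
    fix s assume "x0 \<le> s" "s \<le> x0 + h"
    then have "has_partials2 (pdy f) s t'" using S t' by auto
    then show "((\<lambda>s. pdy f s t') has_real_derivative pdx (pdy f) s t') (at s)"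
      unfolding has_partials2_def pdx_def
      by (auto simp: DERIV_deriv_iff_real_differentiable)
  qed (use h in auto)
  then obtain s' where s': "x0 < s'" "s' < x0 + h" "Dl = h * (h * pdx (pdy f) s' t')"
    using t' by auto
  have "pdy (pdx f) s t = pdx (pdy f) s' t'"
    using t(3) s'(3) h by simp
  then show ?thesis using s t s' t' by (intro exI[of _ s] exI[of _ t] exI[of _ s'] exI[of _ t']) auto
qed

lemma abs_tri_aux: "\<bar>(a::real) - c\<bar> < \<bar>c - e\<bar> / 2 \<Longrightarrow> \<bar>a - e\<bar> < \<bar>c - e\<bar> / 2 \<Longrightarrow> False"
  by (auto simp: abs_if split: if_split_asm)

lemma schwarz:
  fixes f :: "real \<Rightarrow> real \<Rightarrow> real"
  assumes "open \<Omega>" "(x0,y0) \<in> \<Omega>"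
    and P: "\<forall>(x,y)\<in>\<Omega>. has_partials2 f x y \<and> has_partials2 (pdx f) x y \<and> has_partials2 (pdy f) x y"
    and c1: "continuous_on \<Omega> (\<lambda>(x,y). pdy (pdx f) x y)"
    and c2: "continuous_on \<Omega> (\<lambda>(x,y). pdx (pdy f) x y)"
  shows "pdy (pdx f) x0 y0 = pdx (pdy f) x0 y0"
proof (rule ccontr)
  assume ne: "pdy (pdx f) x0 y0 \<noteq> pdx (pdy f) x0 y0"
  define d where "d = \<bar>pdy (pdx f) x0 y0 - pdx (pdy f) x0 y0\<bar> / 2"
  have d: "d > 0" using ne unfolding d_def by simp
  obtain e where e: "e > 0" "ball (x0,y0) e \<subseteq> \<Omega>" using assms(1,2) open_contains_ball by blast
  have "isCont (\<lambda>(x,y). pdy (pdx f) x y) (x0,y0)"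
    using c1 assms(1,2) continuous_on_eq_continuous_at by blast
  then obtain d1 where d1: "d1 > 0" "\<And>z. dist z (x0,y0) < d1 \<Longrightarrow>
      dist ((\<lambda>(x,y). pdy (pdx f) x y) z) (pdy (pdx f) x0 y0) < d"
    using d unfolding continuous_at_eps_delta by fastforce
  have "isCont (\<lambda>(x,y). pdx (pdy f) x y) (x0,y0)"
    using c2 assms(1,2) continuous_on_eq_continuous_at by blast
  then obtain d2 where d2: "d2 > 0" "\<And>z. dist z (x0,y0) < d2 \<Longrightarrow>
      dist ((\<lambda>(x,y). pdx (pdy f) x y) z) (pdx (pdy f) x0 y0) < d"
    using d unfolding continuous_at_eps_delta by fastforce
  define h where "h = min e (min d1 d2) / 3"
  have h: "h > 0" "2 * h < e" "2 * h < d1" "2 * h < d2" using e d1 d2 unfolding h_def by auto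
  have near: "dist (s,t) (x0,y0) \<le> 2 * h" if "x0 \<le> s" "s \<le> x0 + h" "y0 \<le> t" "t \<le> y0 + h" for s t
    using dist_sq_le[of s t x0 y0] that by simp
  have inO: "(s,t) \<in> \<Omega>" if "x0 \<le> s" "s \<le> x0 + h" "y0 \<le> t" "t \<le> y0 + h" for s t
  proof -
    have "dist (x0,y0) (s,t) < e" using near[OF that] h by (simp add: dist_commute)
    then show ?thesis using e by auto
  qed
  obtain s t s' t' where st: "x0 \<le> s" "s \<le> x0 + h" "y0 \<le> t" "t \<le> y0 + h"
    "x0 \<le> s'" "s' \<le> x0 + h" "y0 \<le> t'" "t' \<le> y0 + h" and eq: "pdy (pdx f) s t = pdx (pdy f) s' t'"
    using schwarz_key[of h x0 y0 f] h(1) inO P by fastforce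
  have "dist (pdy (pdx f) s t) (pdy (pdx f) x0 y0) < d"
    using d1(2)[of "(s,t)"] near[OF st(1-4)] h by simp
  moreover have "dist (pdx (pdy f) s' t') (pdx (pdy f) x0 y0) < d"
    using d2(2)[of "(s',t')"] near[OF st(5-8)] h by simp
  ultimately show False using eq unfolding d_def dist_real_def by (metis abs_tri_aux)
qed

lemma dx_DERIV: "has_partials2 f x y \<Longrightarrow> ((\<lambda>t. f t y) has_real_derivative pdx f x y) (at x)"
  unfolding has_partials2_def pdx_def by (simp add: DERIV_deriv_iff_real_differentiable)
lemma dy_DERIV: "has_partials2 f x y \<Longrightarrow> ((\<lambda>t. f x t) has_real_derivative pdy f x y) (at y)"
  unfolding has_partials2_def pdy_def by (simp add: DERIV_deriv_iff_real_differentiable)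


lemma num_id:
  fixes a b u v ax bx by' vx vy p1 p2 :: real
  shows "p1 * ((((- bx * u - b * vy - (ax * v + a * vx)) * p1 + (ax * u + a * vy - (bx * v + b * vx)) * p2) * (- b * p1 + a * p2) - ((- b * u - a * v) * p1 + (a * u - b * v) * p2) * (- bx * p1 + ax * p2)))
       + p2 * ((((- by' * u - b * (- vx) - (bx * v + a * vy)) * p1 + (bx * u + a * (-vx) - (by' * v + b * vy)) * p2) * (- b * p1 + a * p2) - ((- b * u - a * v) * p1 + (a * u - b * v) * p2) * (- by' * p1 + bx * p2)))
       - v * p2 * (p1^2 + p2^2) * (a * ax + b * bx) + v * p1 * (p1^2 + p2^2) * (a * bx + b * by')
       = - (p1^2 + p2^2) * (a * vx + b * vy + v * (ax + by')) * (- b * p1 + a * p2)"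
  by algebra

lemma Hgen:
  fixes Lf :: "real \<Rightarrow> real"
  assumes "(Lf has_real_derivative 2 * c) (at x)" "Lf x \<noteq> 0"
  shows "((\<lambda>t. R / (2 * Lf t)) has_real_derivative (- R * c / (Lf x)^2)) (at x)"
  using assms apply -
  apply (rule derivative_eq_intros refl | assumption | simp)+
  by (simp add: field_simps power2_eq_square)

lemma Hp_gen:
  fixes L c :: real
  assumes "L \<noteq> 0"
  shows "((\<lambda>t. (t^2 + c) / (2 * L)) has_real_derivative (p / L)) (at p)"
    and "((\<lambda>t. (c + t^2) / (2 * L)) has_real_derivative (p / L)) (at p)"
  using assms by (auto intro!: derivative_eq_intros simp: field_simps)

lemma key_alg:
  fixes a b u v ax ay bx by' ux uy vx vy p1 p2 L :: real
  assumes L0: "L \<noteq> 0" and hL: "L = a^2 + b^2" and D0: "- b * p1 + a * p2 \<noteq> 0"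
    and cr1: "ux = vy" and cr2: "uy = - vx" and sym: "ay = bx"
    and E: "a * vx + b * vy + v * (ax + by') = 0"
  shows "((((- bx * u - b * ux - (ax * v + a * vx)) * p1 + (ax * u + a * ux - (bx * v + b * vx)) * p2) * (- b * p1 + a * p2)
           - ((- b * u - a * v) * p1 + (a * u - b * v) * p2) * (- bx * p1 + ax * p2)) / (- b * p1 + a * p2)^2) * (p1 / L)
       + ((((- by' * u - b * uy - (ay * v + a * vy)) * p1 + (ay * u + a * uy - (by' * v + b * vy)) * p2) * (- b * p1 + a * p2)
           - ((- b * u - a * v) * p1 + (a * u - b * v) * p2) * (- by' * p1 + ay * p2)) / (- b * p1 + a * p2)^2) * (p2 / L)
       - (((- b * u - a * v) * (- b * p1 + a * p2) - ((- b * u - a * v) * p1 + (a * u - b * v) * p2) * (- b)) / (- b * p1 + a * p2)^2)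
           * (- (p1^2 + p2^2) * (a * ax + b * bx) / L^2)
       - (((a * u - b * v) * (- b * p1 + a * p2) - ((- b * u - a * v) * p1 + (a * u - b * v) * p2) * a) / (- b * p1 + a * p2)^2)
           * (- (p1^2 + p2^2) * (a * ay + b * by') / L^2) = 0"
proof -
  define D where "D = - b * p1 + a * p2"
  have c1: "(- b * u - a * v) * (- b * p1 + a * p2) - ((- b * u - a * v) * p1 + (a * u - b * v) * p2) * (- b) = - v * L * p2"
    unfolding hL by algebra
  have c2: "(a * u - b * v) * (- b * p1 + a * p2) - ((- b * u - a * v) * p1 + (a * u - b * v) * p2) * a = v * L * p1"
    unfolding hL by algebra
  note n = num_id[of p1 bx u b vy ax v a vx p2 by']
  define A where "A = (((- bx * u - b * vy - (ax * v + a * vx)) * p1 + (ax * u + a * vy - (bx * v + b * vx)) * p2) * (- b * p1 + a * p2) - ((- b * u - a * v) * p1 + (a * u - b * v) * p2) * (- bx * p1 + ax * p2))"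
  define B where "B = ((((- by' * u - b * (- vx) - (bx * v + a * vy)) * p1 + (bx * u + a * (-vx) - (by' * v + b * vy)) * p2) * (- b * p1 + a * p2) - ((- b * u - a * v) * p1 + (a * u - b * v) * p2) * (- by' * p1 + bx * p2)))"
  define R where "R = p1^2 + p2^2"
  have n2: "p1 * A + p2 * B - v * p2 * R * (a * ax + b * bx) + v * p1 * R * (a * bx + b * by') = 0"
    using n E unfolding A_def B_def R_def by simp
  have "(A / D^2) * (p1 / L) + (B / D^2) * (p2 / L) - ((- v * L * p2) / D^2) * (- R * (a * ax + b * bx) / L^2)
      - ((v * L * p1) / D^2) * (- R * (a * bx + b * by') / L^2)
      = (p1 * A + p2 * B - v * p2 * R * (a * ax + b * bx) + v * p1 * R * (a * bx + b * by')) / (D^2 * L)"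
    using L0 D0 unfolding D_def[symmetric] by (simp add: field_simps power2_eq_square)
  also have "\<dots> = 0" using n2 by simp
  finally show ?thesis
    unfolding cr1 cr2 sym c1 c2 using D_def A_def B_def R_def by simp
qed
theorem theorem1:
  fixes u v psi :: "real \<Rightarrow> real \<Rightarrow> real" and \<Omega> :: "(real \<times> real) set"
  assumes "open \<Omega>"
    and "C1_on \<Omega> u" and "C1_on \<Omega> v"
    and "\<forall>(x,y)\<in>\<Omega>. pdx u x y = pdy v x y \<and> pdy u x y = - pdx v x y"
    and "C2_on \<Omega> psi"
    and "\<forall>(x,y)\<in>\<Omega>. pdx (\<lambda>x y. v x y * pdx psi x y) x y + pdy (\<lambda>x y. v x y * pdy psi x y) x y = 0"
  shows "let f2 = (\<lambda>x y. - pdy psi x y); g2 = (\<lambda>x y. pdx psi x y);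
             f1 = (\<lambda>x y. - pdy psi x y * u x y - pdx psi x y * v x y);
             g1 = (\<lambda>x y. pdx psi x y * u x y - pdy psi x y * v x y);
             Lam = (\<lambda>x y. (pdx psi x y)^2 + (pdy psi x y)^2);
             F = (\<lambda>x y p1 p2. (f1 x y * p1 + g1 x y * p2) / (f2 x y * p1 + g2 x y * p2));
             H = geod_H Lam
         in \<forall>x y p1 p2. (x, y) \<in> \<Omega> \<and> Lam x y \<noteq> 0 \<and> f2 x y * p1 + g2 x y * p2 \<noteq> 0 \<longrightarrow>
              has_partials4 F x y p1 p2 \<and> has_partials4 H x y p1 p2 \<and>
              poisson F H x y p1 p2 = 0"
proof -
  have main: "has_partials4 (\<lambda>x y p1 p2. ((- pdy psi x y * u x y - pdx psi x y * v x y) * p1 + (pdx psi x y * u x y - pdy psi x y * v x y) * p2) / (- pdy psi x y * p1 + pdx psi x y * p2)) x y p1 p2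
     \<and> has_partials4 (\<lambda>x y p1 p2. (p1^2 + p2^2) / (2 * ((pdx psi x y)^2 + (pdy psi x y)^2))) x y p1 p2
     \<and> poisson (\<lambda>x y p1 p2. ((- pdy psi x y * u x y - pdx psi x y * v x y) * p1 + (pdx psi x y * u x y - pdy psi x y * v x y) * p2) / (- pdy psi x y * p1 + pdx psi x y * p2))
          (\<lambda>x y p1 p2. (p1^2 + p2^2) / (2 * ((pdx psi x y)^2 + (pdy psi x y)^2))) x y p1 p2 = 0"
    if xy: "(x,y) \<in> \<Omega>" and L0: "(pdx psi x y)^2 + (pdy psi x y)^2 \<noteq> 0"
      and D0: "- pdy psi x y * p1 + pdx psi x y * p2 \<noteq> 0" for x y p1 p2
  proof -
    have C2: "\<forall>(x,y)\<in>\<Omega>. has_partials2 psi x y \<and> has_partials2 (pdx psi) x y \<and> has_partials2 (pdy psi) x y"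
      using assms(5) unfolding C2_on_def by blast
    have hpa: "has_partials2 (pdx psi) x y" and hpb: "has_partials2 (pdy psi) x y"
      using C2 xy by auto
    have hpu: "has_partials2 u x y" using assms(2) xy unfolding C1_on_def by auto
    have hpv: "has_partials2 v x y" using assms(3) xy unfolding C1_on_def by auto
    note dax = dx_DERIV[OF hpa] and day = dy_DERIV[OF hpa]
    note dbx = dx_DERIV[OF hpb] and dby = dy_DERIV[OF hpb]
    note dux = dx_DERIV[OF hpu] and duy = dy_DERIV[OF hpu]
    note dvx = dx_DERIV[OF hpv] and dvy = dy_DERIV[OF hpv]
    have sym: "pdy (pdx psi) x y = pdx (pdy psi) x y"
      using schwarz[OF assms(1) xy C2] assms(5) unfolding C2_on_def by blast
    have cr: "pdx u x y = pdy v x y" "pdy u x y = - pdx v x y" using assms(4) xy by auto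
    have pde0: "pdx (\<lambda>x y. v x y * pdx psi x y) x y + pdy (\<lambda>x y. v x y * pdy psi x y) x y = 0"
      using assms(6) xy by auto
    have e1: "pdx (\<lambda>x y. v x y * pdx psi x y) x y = pdx v x y * pdx psi x y + pdx (pdx psi) x y * v x y"
      unfolding pdx_def[of "\<lambda>x y. v x y * pdx psi x y"]
      by (rule DERIV_imp_deriv) (rule DERIV_mult[OF dvx dax])
    have e2: "pdy (\<lambda>x y. v x y * pdy psi x y) x y = pdy v x y * pdy psi x y + pdy (pdy psi) x y * v x y"
      unfolding pdy_def[of "\<lambda>x y. v x y * pdy psi x y"]
      by (rule DERIV_imp_deriv) (rule DERIV_mult[OF dvy dby])
    have E: "pdx psi x y * pdx v x y + pdy psi x y * pdy v x y + v x y * (pdx (pdx psi) x y + pdy (pdy psi) x y) = 0"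
      using pde0 unfolding e1 e2 by (simp add: algebra_simps)

    have Fx: "((\<lambda>t. ((- pdy psi t y * u t y - pdx psi t y * v t y) * p1 + (pdx psi t y * u t y - pdy psi t y * v t y) * p2) / (- pdy psi t y * p1 + pdx psi t y * p2)) has_real_derivative
       ((((- pdx (pdy psi) x y * u x y - pdy psi x y * pdx u x y - (pdx (pdx psi) x y * v x y + pdx psi x y * pdx v x y)) * p1 + (pdx (pdx psi) x y * u x y + pdx psi x y * pdx u x y - (pdx (pdy psi) x y * v x y + pdy psi x y * pdx v x y)) * p2) * (- pdy psi x y * p1 + pdx psi x y * p2) - ((- pdy psi x y * u x y - pdx psi x y * v x y) * p1 + (pdx psi x y * u x y - pdy psi x y * v x y) * p2) * (- pdx (pdy psi) x y * p1 + pdx (pdx psi) x y * p2)) / (- pdy psi x y * p1 + pdx psi x y * p2)^2)) (at x)"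
      using D0 apply -
      apply (rule derivative_eq_intros dax dbx dux dvx refl | assumption)+
      by (simp only: power2_eq_square) (intro arg_cong2[where f="(/)"] refl; algebra)
    have Fy: "((\<lambda>t. ((- pdy psi x t * u x t - pdx psi x t * v x t) * p1 + (pdx psi x t * u x t - pdy psi x t * v x t) * p2) / (- pdy psi x t * p1 + pdx psi x t * p2)) has_real_derivative
       ((((- pdy (pdy psi) x y * u x y - pdy psi x y * pdy u x y - (pdy (pdx psi) x y * v x y + pdx psi x y * pdy v x y)) * p1 + (pdy (pdx psi) x y * u x y + pdx psi x y * pdy u x y - (pdy (pdy psi) x y * v x y + pdy psi x y * pdy v x y)) * p2) * (- pdy psi x y * p1 + pdx psi x y * p2) - ((- pdy psi x y * u x y - pdx psi x y * v x y) * p1 + (pdx psi x y * u x y - pdy psi x y * v x y) * p2) * (- pdy (pdy psi) x y * p1 + pdy (pdx psi) x y * p2)) / (- pdy psi x y * p1 + pdx psi x y * p2)^2)) (at y)"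
      using D0 apply -
      apply (rule derivative_eq_intros day dby duy dvy refl | assumption)+
      by (simp only: power2_eq_square) (intro arg_cong2[where f="(/)"] refl; algebra)
    have Fp1: "((\<lambda>t. ((- pdy psi x y * u x y - pdx psi x y * v x y) * t + (pdx psi x y * u x y - pdy psi x y * v x y) * p2) / (- pdy psi x y * t + pdx psi x y * p2)) has_real_derivative
       (((- pdy psi x y * u x y - pdx psi x y * v x y) * (- pdy psi x y * p1 + pdx psi x y * p2) - ((- pdy psi x y * u x y - pdx psi x y * v x y) * p1 + (pdx psi x y * u x y - pdy psi x y * v x y) * p2) * (- pdy psi x y)) / (- pdy psi x y * p1 + pdx psi x y * p2)^2)) (at p1)"
      using D0 apply -
      apply (rule derivative_eq_intros refl | assumption)+
      by (simp only: power2_eq_square) (intro arg_cong2[where f="(/)"] refl; algebra)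
    have Fp2: "((\<lambda>t. ((- pdy psi x y * u x y - pdx psi x y * v x y) * p1 + (pdx psi x y * u x y - pdy psi x y * v x y) * t) / (- pdy psi x y * p1 + pdx psi x y * t)) has_real_derivative
       (((pdx psi x y * u x y - pdy psi x y * v x y) * (- pdy psi x y * p1 + pdx psi x y * p2) - ((- pdy psi x y * u x y - pdx psi x y * v x y) * p1 + (pdx psi x y * u x y - pdy psi x y * v x y) * p2) * pdx psi x y) / (- pdy psi x y * p1 + pdx psi x y * p2)^2)) (at p2)"
      using D0 apply -
      apply (rule derivative_eq_intros refl | assumption)+
      by (simp only: power2_eq_square) (intro arg_cong2[where f="(/)"] refl; algebra)
    have Hp1: "((\<lambda>t. (t^2 + p2^2) / (2 * ((pdx psi x y)^2 + (pdy psi x y)^2))) has_real_derivative (p1 / ((pdx psi x y)^2 + (pdy psi x y)^2))) (at p1)"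
      by (rule Hp_gen(1)[OF L0])
    have Hp2: "((\<lambda>t. (p1^2 + t^2) / (2 * ((pdx psi x y)^2 + (pdy psi x y)^2))) has_real_derivative (p2 / ((pdx psi x y)^2 + (pdy psi x y)^2))) (at p2)"
      by (rule Hp_gen(2)[OF L0])
    have dLx: "((\<lambda>t. (pdx psi t y)^2 + (pdy psi t y)^2) has_real_derivative 2 * (pdx psi x y * pdx (pdx psi) x y + pdy psi x y * pdx (pdy psi) x y)) (at x)"
      apply (rule derivative_eq_intros dax dbx refl)+
      by (simp add: algebra_simps)
    have dLy: "((\<lambda>t. (pdx psi x t)^2 + (pdy psi x t)^2) has_real_derivative 2 * (pdx psi x y * pdy (pdx psi) x y + pdy psi x y * pdy (pdy psi) x y)) (at y)"
      apply (rule derivative_eq_intros day dby refl)+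
      by (simp add: algebra_simps)
    have Hx: "((\<lambda>t. (p1^2 + p2^2) / (2 * ((pdx psi t y)^2 + (pdy psi t y)^2))) has_real_derivative (- (p1^2 + p2^2) * (pdx psi x y * pdx (pdx psi) x y + pdy psi x y * pdx (pdy psi) x y) / ((pdx psi x y)^2 + (pdy psi x y)^2)^2)) (at x)"
      by (rule Hgen[where Lf="\<lambda>t. (pdx psi t y)^2 + (pdy psi t y)^2", OF dLx L0])
    have Hy: "((\<lambda>t. (p1^2 + p2^2) / (2 * ((pdx psi x t)^2 + (pdy psi x t)^2))) has_real_derivative (- (p1^2 + p2^2) * (pdx psi x y * pdy (pdx psi) x y + pdy psi x y * pdy (pdy psi) x y) / ((pdx psi x y)^2 + (pdy psi x y)^2)^2)) (at y)"
      by (rule Hgen[where Lf="\<lambda>t. (pdx psi x t)^2 + (pdy psi x t)^2", OF dLy L0])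
    have K: "poisson (\<lambda>x y p1 p2. ((- pdy psi x y * u x y - pdx psi x y * v x y) * p1 + (pdx psi x y * u x y - pdy psi x y * v x y) * p2) / (- pdy psi x y * p1 + pdx psi x y * p2)) (\<lambda>x y p1 p2. (p1^2 + p2^2) / (2 * ((pdx psi x y)^2 + (pdy psi x y)^2))) x y p1 p2 = 0"
      unfolding poisson_def d_x_def d_y_def d_p1_def d_p2_def
      unfolding DERIV_imp_deriv[OF Fx] DERIV_imp_deriv[OF Fy] DERIV_imp_deriv[OF Fp1] DERIV_imp_deriv[OF Fp2]
        DERIV_imp_deriv[OF Hx] DERIV_imp_deriv[OF Hy] DERIV_imp_deriv[OF Hp1] DERIV_imp_deriv[OF Hp2]
      by (rule key_alg[OF L0 refl D0 cr sym E])
    show ?thesis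
      unfolding has_partials4_def real_differentiable_def
      using Fx Fy Fp1 Fp2 Hx Hy Hp1 Hp2 K by blast
  qed
  show ?thesis unfolding Let_def geod_H_def using main by blast
qed
end
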